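(* Let $\alpha$ be a partial action datum of $M$ on $X\in\mathscr{C}$ such that the coproducts $\coprod_{m\in M}X$ and $\coprod_{(m,n)\in M\times M}\operatorname{dom}\alpha_n$ exist, and let $c\colon\coprod_{m\in M}X\to Y$ be a coequalizer of $p$ and $q$ in $\mathscr{C}$. Then for each $m\in M$ there is a unique morphism $\beta_m\colon Y\to Y$ with $\beta_m\circ c\circ u_s=c\circ u_{ms}$ for all $s\in M$, the datum $\beta(m)=[Y,\mathrm{id}_Y,\beta_m]$ is a global action of $M$ on $Y$, and $c\circ u_e\colon\alpha\to\beta$ is a reflection of $\alpha$ in $\mathrm{Act}_M(\mathscr{C})$.
   Context: Standing assumptions: $M$ is a monoid with identity $e$ and $\mathscr{C}$ is a category with pullbacks. A partial action datum of $M$ on $X$ assigns to each $m\in M$ an isomorphism class of spans $[\operatorname{dom}\alpha_m,\iota_m,\alpha_m]$ with $\iota_m\colon\operatorname{dom}\alpha_m\to X$ a monomorphism and $\alpha_m\colon\operatorname{dom}\alpha_m\to X$ (isomorphism of spans: an isomorphism of apexes commuting with both legs); representatives are fixed. A global action of $M$ on $Y$ is a datum with $\beta(m)=[Y,\mathrm{id}_Y,\beta_m]$, $\beta_e=\mathrm{id}_Y$, $\beta_n\circ\beta_m=\beta_{nm}$. Given data $\alpha$ on $X$ and $\beta$ on $Y$ with representatives $[\operatorname{dom}\alpha_m,\iota_m,\alpha_m]$, $[\operatorname{dom}\beta_m,\kappa_m,\beta_m]$, a datum morphism $\alpha\to\beta$ is a morphism $f\colon X\to Y$ such that for each $m$ there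 is $f_m$ with $\kappa_m\circ f_m=f\circ\iota_m$, $\beta_m\circ f_m=f\circ\alpha_m$. $\mathrm{Act}_M(\mathscr{C})$ is the category of global actions with datum morphisms. A reflection of $\alpha$ in $\mathrm{Act}_M(\mathscr{C})$ is a datum morphism $r\colon\alpha\to\beta$ with $\beta$ global such that for every datum morphism $f\colon\alpha\to\gamma$ with $\gamma$ global there is a unique datum morphism $f'\colon\beta\to\gamma$ with $f'\circ r=f$. Let $u_m\colon X\to\coprod_{m\in M}X$ and $u_{(m,n)}\colon\operatorname{dom}\alpha_n\to\coprod_{(m,n)\in M\times M}\operatorname{dom}\alpha_n$ be the coproduct inclusions, and let $p,q\colon\coprod_{(m,n)}\operatorname{dom}\alpha_n\to\coprod_{m}X$ be the unique morphisms with $p\circ u_{(m,n)}=u_{mn}\circ\iota_n$ and $q\circ u_{(m,n)}=u_m\circ\alpha_n$. *)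

theory Defs
  imports Main
begin

text \<open>A (small or large) category presented by objects of type 'o and arrows of type 'a.
  Comp g f is the composite g after f (defined when Cod f = Dom g).\<close>

record ('o, 'a) cat =
  Obj  :: "'o set"
  Arr  :: "'a set"
  Dom  :: "'a \<Rightarrow> 'o"
  Cod  :: "'a \<Rightarrow> 'o"
  Comp :: "'a \<Rightarrow> 'a \<Rightarrow> 'a"
  Idm  :: "'o \<Rightarrow> 'a"

definition hom :: "('o, 'a) cat \<Rightarrow> 'a \<Rightarrow> 'o \<Rightarrow> 'o \<Rightarrow> bool" where
  "hom C f x y \<longleftrightarrow> f \<in> Arr C \<and> Dom C f = x \<and> Cod C f = y"

definition is_category :: "('o, 'a) cat \<Rightarrow> bool" where
  "is_category C \<longleftrightarrow>
     (\<forall>x\<in>Obj C. hom C (Idm C x) x x) \<and>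
     (\<forall>f\<in>Arr C. Dom C f \<in> Obj C \<and> Cod C f \<in> Obj C) \<and>
     (\<forall>f\<in>Arr C. \<forall>g\<in>Arr C. Cod C f = Dom C g \<longrightarrow>
         hom C (Comp C g f) (Dom C f) (Cod C g)) \<and>
     (\<forall>f\<in>Arr C. \<forall>g\<in>Arr C. \<forall>h\<in>Arr C. Cod C f = Dom C g \<longrightarrow> Cod C g = Dom C h \<longrightarrow>
         Comp C h (Comp C g f) = Comp C (Comp C h g) f) \<and>
     (\<forall>f\<in>Arr C. Comp C (Idm C (Cod C f)) f = f \<and> Comp C f (Idm C (Dom C f)) = f)"

definition mono :: "('o, 'a) cat \<Rightarrow> 'a \<Rightarrow> bool" where
  "mono C f \<longleftrightarrow> f \<in> Arr C \<and>
     (\<forall>g\<in>Arr C. \<forall>h\<in>Arr C. Cod C g = Dom C f \<longrightarrow> Cod C h = Dom C f \<longrightarrow> Dom C g = Dom C h \<longrightarrow>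
        Comp C f g = Comp C f h \<longrightarrow> g = h)"

definition has_pullbacks :: "('o, 'a) cat \<Rightarrow> bool" where
  "has_pullbacks C \<longleftrightarrow>
     (\<forall>f\<in>Arr C. \<forall>g\<in>Arr C. Cod C f = Cod C g \<longrightarrow>
        (\<exists>P p1 p2. P \<in> Obj C \<and> hom C p1 P (Dom C f) \<and> hom C p2 P (Dom C g) \<and>
           Comp C f p1 = Comp C g p2 \<and>
           (\<forall>Q\<in>Obj C. \<forall>q1 q2. hom C q1 Q (Dom C f) \<longrightarrow> hom C q2 Q (Dom C g) \<longrightarrow>
               Comp C f q1 = Comp C g q2 \<longrightarrow>
               (\<exists>!k. hom C k Q P \<and> Comp C p1 k = q1 \<and> Comp C p2 k = q2))))"

definition is_coproduct :: "('o, 'a) cat \<Rightarrow> ('i \<Rightarrow> 'o) \<Rightarrow> 'o \<Rightarrow> ('i \<Rightarrow> 'a) \<Rightarrow> bool" where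
  "is_coproduct C A S u \<longleftrightarrow> S \<in> Obj C \<and> (\<forall>i. hom C (u i) (A i) S) \<and>
     (\<forall>Z\<in>Obj C. \<forall>h. (\<forall>i. hom C (h i) (A i) Z) \<longrightarrow>
        (\<exists>!k. hom C k S Z \<and> (\<forall>i. Comp C k (u i) = h i)))"

definition is_coequalizer :: "('o, 'a) cat \<Rightarrow> 'a \<Rightarrow> 'a \<Rightarrow> 'a \<Rightarrow> 'o \<Rightarrow> bool" where
  "is_coequalizer C p q c Y \<longleftrightarrow>
     p \<in> Arr C \<and> q \<in> Arr C \<and> Dom C p = Dom C q \<and> Cod C p = Cod C q \<and>
     Y \<in> Obj C \<and> hom C c (Cod C p) Y \<and> Comp C c p = Comp C c q \<and>
     (\<forall>Z\<in>Obj C. \<forall>h. hom C h (Cod C p) Z \<longrightarrow> Comp C h p = Comp C h q \<longrightarrow>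
        (\<exists>!k. hom C k Y Z \<and> Comp C k c = h))"

text \<open>Partial action datum of the monoid 'm on X, given by fixed representatives
  [D m, \<iota> m, \<alpha> m] of the span classes.\<close>
definition partial_action_datum ::
  "('o, 'a) cat \<Rightarrow> 'o \<Rightarrow> ('m \<Rightarrow> 'o) \<Rightarrow> ('m \<Rightarrow> 'a) \<Rightarrow> ('m \<Rightarrow> 'a) \<Rightarrow> bool" where
  "partial_action_datum C X D \<iota> \<alpha> \<longleftrightarrow> X \<in> Obj C \<and>
     (\<forall>m. D m \<in> Obj C \<and> hom C (\<iota> m) (D m) X \<and> mono C (\<iota> m) \<and> hom C (\<alpha> m) (D m) X)"

text \<open>Global action: datum with representatives [Y, id_Y, \<beta> m].\<close>
definition global_action :: "('o, 'a) cat \<Rightarrow> 'o \<Rightarrow> ('m::monoid_mult \<Rightarrow> 'a) \<Rightarrow> bool" where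
  "global_action C Y \<beta> \<longleftrightarrow> Y \<in> Obj C \<and> (\<forall>m. hom C (\<beta> m) Y Y) \<and>
     \<beta> 1 = Idm C Y \<and> (\<forall>m n. Comp C (\<beta> n) (\<beta> m) = \<beta> (n * m))"

definition datum_morphism ::
  "('o, 'a) cat \<Rightarrow> 'o \<Rightarrow> ('m \<Rightarrow> 'o) \<Rightarrow> ('m \<Rightarrow> 'a) \<Rightarrow> ('m \<Rightarrow> 'a) \<Rightarrow>
   'o \<Rightarrow> ('m \<Rightarrow> 'o) \<Rightarrow> ('m \<Rightarrow> 'a) \<Rightarrow> ('m \<Rightarrow> 'a) \<Rightarrow> 'a \<Rightarrow> bool" where
  "datum_morphism C X D \<iota> \<alpha> Y E \<kappa> \<beta> f \<longleftrightarrow> hom C f X Y \<and>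
     (\<forall>m. \<exists>fm. hom C fm (D m) (E m) \<and> Comp C (\<kappa> m) fm = Comp C f (\<iota> m) \<and>
                Comp C (\<beta> m) fm = Comp C f (\<alpha> m))"

abbreviation datum_morphism_to_global ::
  "('o, 'a) cat \<Rightarrow> 'o \<Rightarrow> ('m \<Rightarrow> 'o) \<Rightarrow> ('m \<Rightarrow> 'a) \<Rightarrow> ('m \<Rightarrow> 'a) \<Rightarrow> 'o \<Rightarrow> ('m \<Rightarrow> 'a) \<Rightarrow> 'a \<Rightarrow> bool" where
  "datum_morphism_to_global C X D \<iota> \<alpha> Y \<beta> f \<equiv>
     datum_morphism C X D \<iota> \<alpha> Y (\<lambda>_. Y) (\<lambda>_. Idm C Y) \<beta> f"

definition is_reflection ::
  "('o, 'a) cat \<Rightarrow> 'o \<Rightarrow> ('m::monoid_mult \<Rightarrow> 'o) \<Rightarrow> ('m \<Rightarrow> 'a) \<Rightarrow> ('m \<Rightarrow> 'a) \<Rightarrow> 'o \<Rightarrow> ('m \<Rightarrow> 'a) \<Rightarrow> 'a \<Rightarrow> bool" where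
  "is_reflection C X D \<iota> \<alpha> Y \<beta> r \<longleftrightarrow>
     global_action C Y \<beta> \<and> datum_morphism_to_global C X D \<iota> \<alpha> Y \<beta> r \<and>
     (\<forall>Z\<in>Obj C. \<forall>\<gamma>. global_action C Z \<gamma> \<longrightarrow>
        (\<forall>f. datum_morphism_to_global C X D \<iota> \<alpha> Z \<gamma> f \<longrightarrow>
           (\<exists>!f'. datum_morphism C Y (\<lambda>_. Y) (\<lambda>_. Idm C Y) \<beta> Z (\<lambda>_. Z) (\<lambda>_. Idm C Z) \<gamma> f' \<and>
                  Comp C f' r = f)))"

end

theory Submission
  imports Defs
begin

lemma ex1_eq: "\<exists>!x. P x \<Longrightarrow> P a \<Longrightarrow> P b \<Longrightarrow> a = b"
  by blast

lemma cat_comp: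
  assumes "is_category C" "hom C f x y" "hom C g y z" shows "hom C (Comp C g f) x z"
proof -
  have "\<forall>f\<in>Arr C. \<forall>g\<in>Arr C. Cod C f = Dom C g \<longrightarrow> hom C (Comp C g f) (Dom C f) (Cod C g)"
    using assms(1) unfolding is_category_def by (elim conjE)
  then show ?thesis using assms(2,3) unfolding hom_def[of C f x y] hom_def[of C g y z] by auto
qed

lemma cat_assoc:
  assumes "is_category C" "hom C f x y" "hom C g y z" "hom C h z w"
  shows "Comp C (Comp C h g) f = Comp C h (Comp C g f)"
proof -
  have "\<forall>f\<in>Arr C. \<forall>g\<in>Arr C. \<forall>h\<in>Arr C. Cod C f = Dom C g \<longrightarrow> Cod C g = Dom C h \<longrightarrow>
         Comp C h (Comp C g f) = Comp C (Comp C h g) f"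
    using assms(1) unfolding is_category_def by (elim conjE)
  then show ?thesis using assms(2,3,4) unfolding hom_def by auto
qed

lemma cat_idl:
  assumes "is_category C" "hom C f x y" shows "Comp C (Idm C y) f = f"
proof -
  have "\<forall>f\<in>Arr C. Comp C (Idm C (Cod C f)) f = f \<and> Comp C f (Idm C (Dom C f)) = f"
    using assms(1) unfolding is_category_def by (elim conjE)
  then show ?thesis using assms(2) unfolding hom_def by auto
qed

lemma cat_idr:
  assumes "is_category C" "hom C f x y" shows "Comp C f (Idm C x) = f"
proof -
  have "\<forall>f\<in>Arr C. Comp C (Idm C (Cod C f)) f = f \<and> Comp C f (Idm C (Dom C f)) = f"
    using assms(1) unfolding is_category_def by (elim conjE)
  then show ?thesis using assms(2) unfolding hom_def by auto
qed

lemma cat_id: "is_category C \<Longrightarrow> x \<in> Obj C \<Longrightarrow> hom C (Idm C x) x x"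
  unfolding is_category_def by blast

lemma cat_obj:
  assumes "is_category C" "hom C f x y" shows "x \<in> Obj C \<and> y \<in> Obj C"
proof -
  have "\<forall>f\<in>Arr C. Dom C f \<in> Obj C \<and> Cod C f \<in> Obj C"
    using assms(1) unfolding is_category_def by (elim conjE)
  then show ?thesis using assms(2) unfolding hom_def by auto
qed

lemma cop_U: "is_coproduct C A S u \<Longrightarrow> Z \<in> Obj C \<Longrightarrow> (\<And>i. hom C (h i) (A i) Z) \<Longrightarrow>
   \<exists>!k. hom C k S Z \<and> (\<forall>i. Comp C k (u i) = h i)"
proof -
  assume a: "is_coproduct C A S u" "Z \<in> Obj C" "\<And>i. hom C (h i) (A i) Z"
  have U: "\<forall>Z\<in>Obj C. \<forall>h. (\<forall>i. hom C (h i) (A i) Z) \<longrightarrow>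
        (\<exists>!k. hom C k S Z \<and> (\<forall>i. Comp C k (u i) = h i))"
    using a(1) unfolding is_coproduct_def by (elim conjE)
  have "\<forall>i. hom C (h i) (A i) Z" using a(3) by blast
  then show ?thesis using U[rule_format, OF a(2)] by blast
qed

lemma cop_ext: "is_category C \<Longrightarrow> is_coproduct C A S u \<Longrightarrow> hom C k S Z \<Longrightarrow> hom C k' S Z \<Longrightarrow> Z \<in> Obj C \<Longrightarrow>
   (\<And>i. Comp C k (u i) = Comp C k' (u i)) \<Longrightarrow> k = k'"
proof -
  assume cat: "is_category C"
  assume a: "is_coproduct C A S u" "hom C k S Z" "hom C k' S Z" "Z \<in> Obj C"
    "\<And>i. Comp C k (u i) = Comp C k' (u i)"
  have hu: "hom C (u i) (A i) S" for i using a(1) unfolding is_coproduct_def by blast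
  have "\<exists>!kk. hom C kk S Z \<and> (\<forall>i. Comp C kk (u i) = Comp C k (u i))"
    by (rule cop_U[OF a(1,4)]) (rule cat_comp[OF cat hu a(2)])
  then show ?thesis
    by (rule ex1_eq) (use a(2,3,5) in auto)
qed

lemma cop_ex: "is_coproduct C A S u \<Longrightarrow> Z \<in> Obj C \<Longrightarrow> (\<And>i. hom C (h i) (A i) Z) \<Longrightarrow>
   \<exists>k. hom C k S Z \<and> (\<forall>i. Comp C k (u i) = h i)"
  by (rule ex1_implies_ex, rule cop_U)

lemma coeq_ext: "is_coequalizer C p q c Y \<Longrightarrow> is_category C \<Longrightarrow> hom C k Y Z \<Longrightarrow> hom C k' Y Z \<Longrightarrow>
   Comp C k c = Comp C k' c \<Longrightarrow> k = k'"
proof -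
  assume a: "is_coequalizer C p q c Y" "is_category C" "hom C k Y Z" "hom C k' Y Z"
     "Comp C k c = Comp C k' c"
  have c: "hom C c (Cod C p) Y" "Comp C c p = Comp C c q" "p \<in> Arr C" "q \<in> Arr C"
    "Dom C p = Dom C q" using a(1) unfolding is_coequalizer_def by auto
  have p: "hom C p (Dom C p) (Cod C p)" "hom C q (Dom C p) (Cod C p)"
    using c a(1) unfolding hom_def is_coequalizer_def by auto
  have h: "hom C (Comp C k c) (Cod C p) Z" by (rule cat_comp[OF a(2) c(1) a(3)])
  have e: "Comp C (Comp C k c) p = Comp C (Comp C k c) q"
    using cat_assoc[OF a(2) p(1) c(1) a(3)] cat_assoc[OF a(2) p(2) c(1) a(3)] c(2) by simp
  have "Z \<in> Obj C" using cat_obj[OF a(2) a(3)] by auto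
  moreover have U: "\<forall>Z\<in>Obj C. \<forall>h. hom C h (Cod C p) Z \<longrightarrow> Comp C h p = Comp C h q \<longrightarrow>
        (\<exists>!k. hom C k Y Z \<and> Comp C k c = h)"
    using a(1) unfolding is_coequalizer_def by (elim conjE)
  ultimately have "\<exists>!kk. hom C kk Y Z \<and> Comp C kk c = Comp C k c"
    using U[rule_format, OF _ h e] by blast
  then show ?thesis
    by (rule ex1_eq) (use a(3,4,5) in auto)
qed

lemma coeq_ex: "is_coequalizer C p q c Y \<Longrightarrow> is_category C \<Longrightarrow> hom C h (Cod C p) Z \<Longrightarrow>
   Comp C h p = Comp C h q \<Longrightarrow> \<exists>k. hom C k Y Z \<and> Comp C k c = h"
proof -
  assume a: "is_coequalizer C p q c Y" "is_category C" "hom C h (Cod C p) Z" "Comp C h p = Comp C h q"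
  have "Z \<in> Obj C" using cat_obj[OF a(2) a(3)] by auto
  moreover have U: "\<forall>Z\<in>Obj C. \<forall>h. hom C h (Cod C p) Z \<longrightarrow> Comp C h p = Comp C h q \<longrightarrow>
        (\<exists>!k. hom C k Y Z \<and> Comp C k c = h)"
    using a(1) unfolding is_coequalizer_def by (elim conjE)
  ultimately have "\<exists>!k. hom C k Y Z \<and> Comp C k c = h"
    using U[rule_format, OF _ a(3,4)] by blast
  then show ?thesis by (rule ex1_implies_ex)
qed

theorem mainTheorem11:
  fixes C :: "('o, 'a) cat"
    and X :: 'o and D :: "'m::monoid_mult \<Rightarrow> 'o" and \<iota> \<alpha> :: "'m \<Rightarrow> 'a"
    and S T Y :: 'o and u :: "'m \<Rightarrow> 'a" and v :: "'m \<times> 'm \<Rightarrow> 'a"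
    and p q c :: 'a
  assumes cat: "is_category C"
    and "has_pullbacks C"
    and pad: "partial_action_datum C X D \<iota> \<alpha>"
    and cS: "is_coproduct C (\<lambda>_. X) S u"
    and cT: "is_coproduct C (\<lambda>(m, n). D n) T v"
    and hp: "hom C p T S" and pv: "\<forall>m n. Comp C p (v (m, n)) = Comp C (u (m * n)) (\<iota> n)"
    and hq: "hom C q T S" and qv: "\<forall>m n. Comp C q (v (m, n)) = Comp C (u m) (\<alpha> n)"
    and co: "is_coequalizer C p q c Y"
  shows "\<exists>\<beta>. (\<forall>m. hom C (\<beta> m) Y Y \<and>
               (\<forall>s. Comp C (\<beta> m) (Comp C c (u s)) = Comp C c (u (m * s))) \<and>
               (\<forall>b. hom C b Y Y \<longrightarrow>
                    (\<forall>s. Comp C b (Comp C c (u s)) = Comp C c (u (m * s))) \<longrightarrow> b = \<beta> m)) \<and>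
             global_action C Y \<beta> \<and>
             is_reflection C X D \<iota> \<alpha> Y \<beta> (Comp C c (u 1))"
proof -
  have hu: "\<And>s. hom C (u s) X S" using cS unfolding is_coproduct_def by auto
  have hv: "\<And>m n. hom C (v (m,n)) (D n) T" using cT unfolding is_coproduct_def by auto
  have hi: "\<And>n. hom C (\<iota> n) (D n) X" and ha: "\<And>n. hom C (\<alpha> n) (D n) X"
    and hD: "\<And>n. D n \<in> Obj C" and hX: "X \<in> Obj C"
    using pad unfolding partial_action_datum_def by auto
  have Cp: "Cod C p = S" using hp unfolding hom_def by auto
  have hc: "hom C c S Y" and cpq: "Comp C c p = Comp C c q" and hY: "Y \<in> Obj C"
    using co Cp unfolding is_coequalizer_def by auto
  have hS: "S \<in> Obj C" using cS unfolding is_coproduct_def by auto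
  have hpv: "Comp C (Comp C h p) (v (k, n)) = Comp C (Comp C h (u (k*n))) (\<iota> n)"
    if "hom C h S Z" for h Z k n
    using cat_assoc[OF cat hv hp that] cat_assoc[OF cat hi hu that] pv by simp
  have hqv: "Comp C (Comp C h q) (v (k, n)) = Comp C (Comp C h (u k)) (\<alpha> n)"
    if "hom C h S Z" for h Z k n
    using cat_assoc[OF cat hv hq that] cat_assoc[OF cat ha hu that] qv by simp
  have crit: "Comp C h p = Comp C h q"
    if h: "hom C h S Z" and e: "\<And>k n. Comp C (Comp C h (u (k*n))) (\<iota> n) = Comp C (Comp C h (u k)) (\<alpha> n)"
    for h Z
  proof -
    have Z: "Z \<in> Obj C" using cat_obj[OF cat h] by auto
    show ?thesis
    proof (rule cop_ext[OF cat cT cat_comp[OF cat hp h] cat_comp[OF cat hq h] Z])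
      fix i show "Comp C (Comp C h p) (v i) = Comp C (Comp C h q) (v i)"
        using hpv[OF h] hqv[OF h] e by (cases i) simp
    qed
  qed
  have E: "Comp C (Comp C c (u (k*n))) (\<iota> n) = Comp C (Comp C c (u k)) (\<alpha> n)" for k n
    using hpv[OF hc, of k n] hqv[OF hc, of k n] cpq by simp
  define \<sigma> where "\<sigma> m = (SOME \<sigma>. hom C \<sigma> S S \<and> (\<forall>s. Comp C \<sigma> (u s) = u (m*s)))" for m
  have s12: "hom C (\<sigma> m) S S \<and> (\<forall>s. Comp C (\<sigma> m) (u s) = u (m*s))" for m
  proof -
    have "\<exists>\<sigma>. hom C \<sigma> S S \<and> (\<forall>s. Comp C \<sigma> (u s) = u (m*s))"
      by (rule cop_ex[OF cS hS, of "\<lambda>s. u (m*s)"]) (rule hu)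
    then show ?thesis unfolding \<sigma>_def by (rule someI_ex)
  qed
  have s1: "\<And>m. hom C (\<sigma> m) S S" and s2: "\<And>m s. Comp C (\<sigma> m) (u s) = u (m*s)"
    using s12 by auto
  have cs_u: "Comp C (Comp C c (\<sigma> m)) (u s) = Comp C c (u (m*s))" for m s
    using cat_assoc[OF cat hu s1 hc] s2 by simp
  have hcs: "hom C (Comp C c (\<sigma> m)) S Y" for m using cat_comp[OF cat s1 hc] .
  have csq: "Comp C (Comp C c (\<sigma> m)) p = Comp C (Comp C c (\<sigma> m)) q" for m
    by (rule crit[OF hcs]) (simp only: cs_u mult.assoc[symmetric] E)
  define \<beta> where "\<beta> m = (SOME b. hom C b Y Y \<and> Comp C b c = Comp C c (\<sigma> m))" for m
  have b12: "hom C (\<beta> m) Y Y \<and> Comp C (\<beta> m) c = Comp C c (\<sigma> m)" for m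
  proof -
    have "\<exists>b. hom C b Y Y \<and> Comp C b c = Comp C c (\<sigma> m)"
      by (rule coeq_ex[OF co cat, of "Comp C c (\<sigma> m)" Y]) (use hcs Cp csq in auto)
    then show ?thesis unfolding \<beta>_def by (rule someI_ex)
  qed
  have b1: "\<And>m. hom C (\<beta> m) Y Y" and b2: "\<And>m. Comp C (\<beta> m) c = Comp C c (\<sigma> m)"
    using b12 by auto
  have hcu: "hom C (Comp C c (u s)) X Y" for s using cat_comp[OF cat hu hc] .
  have b3: "Comp C (\<beta> m) (Comp C c (u s)) = Comp C c (u (m*s))" for m s
    using cat_assoc[OF cat hu hc b1, symmetric] b2 cs_u by simp
  have Yext: "k = k'" if "hom C k Y Z" "hom C k' Y Z"
    "\<And>s. Comp C k (Comp C c (u s)) = Comp C k' (Comp C c (u s))" for k k' Z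
  proof (rule coeq_ext[OF co cat that(1,2)])
    have Z: "Z \<in> Obj C" using cat_obj[OF cat that(1)] by auto
    show "Comp C k c = Comp C k' c"
    proof (rule cop_ext[OF cat cS cat_comp[OF cat hc that(1)] cat_comp[OF cat hc that(2)] Z])
      fix i show "Comp C (Comp C k c) (u i) = Comp C (Comp C k' c) (u i)"
        using that(3)[of i] cat_assoc[OF cat hu hc that(1)] cat_assoc[OF cat hu hc that(2)] by simp
    qed
  qed
  have uniq: "\<forall>b. hom C b Y Y \<longrightarrow>
                    (\<forall>s. Comp C b (Comp C c (u s)) = Comp C c (u (m * s))) \<longrightarrow> b = \<beta> m" for m
  proof (intro allI impI)
    fix b assume h: "hom C b Y Y" and e: "\<forall>s. Comp C b (Comp C c (u s)) = Comp C c (u (m * s))"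
    show "b = \<beta> m"
    proof (rule Yext[OF h b1])
      fix s show "Comp C b (Comp C c (u s)) = Comp C (\<beta> m) (Comp C c (u s))"
        using e b3 by simp
    qed
  qed
  have hIY: "hom C (Idm C Y) Y Y" using cat_id[OF cat hY] .
  have ga: "global_action C Y \<beta>"
    unfolding global_action_def
  proof (intro conjI allI)
    show "Y \<in> Obj C" by (rule hY)
    show "hom C (\<beta> m) Y Y" for m by (rule b1)
    show "\<beta> 1 = Idm C Y"
      by (rule uniq[of 1, rule_format, OF hIY, symmetric]) (simp add: cat_idl[OF cat hcu])
    fix m n
    have "Comp C (Comp C (\<beta> n) (\<beta> m)) (Comp C c (u s)) = Comp C c (u ((n*m) * s))" for s
      using cat_assoc[OF cat hcu b1 b1] b3 by (simp add: mult.assoc)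
    then show "Comp C (\<beta> n) (\<beta> m) = \<beta> (n * m)"
      by (rule uniq[of "n*m", rule_format, OF cat_comp[OF cat b1 b1]])
  qed
  define r where "r = Comp C c (u 1)"
  have hr: "hom C r X Y" unfolding r_def by (rule hcu)
  have dm: "datum_morphism_to_global C X D \<iota> \<alpha> Y \<beta> r"
    unfolding datum_morphism_def
  proof (intro conjI allI hr)
    fix m
    have hf: "hom C (Comp C r (\<iota> m)) (D m) Y" using cat_comp[OF cat hi hr] .
    have "Comp C (\<beta> m) (Comp C r (\<iota> m)) = Comp C r (\<alpha> m)"
      using cat_assoc[OF cat hi hcu b1, symmetric] b3[of m 1] E[of 1 m]
        cat_assoc[OF cat hi hu hc] cat_assoc[OF cat ha hu hc] unfolding r_def by simp
    then show "\<exists>fm. hom C fm (D m) Y \<and> Comp C (Idm C Y) fm = Comp C r (\<iota> m) \<and>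
                Comp C (\<beta> m) fm = Comp C r (\<alpha> m)"
      using hf cat_idl[OF cat hf] by (intro exI[of _ "Comp C r (\<iota> m)"] conjI)
  qed
  have refl: "is_reflection C X D \<iota> \<alpha> Y \<beta> r"
    unfolding is_reflection_def
  proof (intro conjI ga dm ballI allI impI)
    fix Z \<gamma> f
    assume Z: "Z \<in> Obj C" and gZ: "global_action C Z \<gamma>"
      and fd: "datum_morphism_to_global C X D \<iota> \<alpha> Z \<gamma> f"
    have g1: "\<And>m. hom C (\<gamma> m) Z Z" and g2: "\<gamma> 1 = Idm C Z"
      and g3: "\<And>m n. Comp C (\<gamma> n) (\<gamma> m) = \<gamma> (n * m)"
      using gZ unfolding global_action_def by auto
    have hf: "hom C f X Z" using fd unfolding datum_morphism_def by auto
    have hIZ: "hom C (Idm C Z) Z Z" using cat_id[OF cat Z] .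
    have fa: "Comp C (\<gamma> m) (Comp C f (\<iota> m)) = Comp C f (\<alpha> m)" for m
    proof -
      obtain fm where e0: "hom C fm (D m) Z" and e1: "Comp C (Idm C Z) fm = Comp C f (\<iota> m)"
        and e2: "Comp C (\<gamma> m) fm = Comp C f (\<alpha> m)"
        using fd unfolding datum_morphism_def by blast
      have "fm = Comp C f (\<iota> m)" using cat_idl[OF cat e0] e1 by simp
      then show ?thesis using e2 by simp
    qed
    have hgf: "hom C (Comp C (\<gamma> s) f) X Z" for s using cat_comp[OF cat hf g1] .
    obtain g where hg: "hom C g S Z" and gu: "\<And>s. Comp C g (u s) = Comp C (\<gamma> s) f"
      using cop_ex[OF cS Z, of "\<lambda>s. Comp C (\<gamma> s) f", OF hgf] by blast
    have "Comp C g p = Comp C g q"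
    proof (rule crit[OF hg])
      fix k n
      have "Comp C (Comp C g (u (k*n))) (\<iota> n) = Comp C (\<gamma> k) (Comp C (Comp C (\<gamma> n) f) (\<iota> n))"
        using gu g3[where n=k and m=n, symmetric] cat_assoc[OF cat hi hf g1] cat_assoc[OF cat hf g1 g1]
          cat_assoc[OF cat hi hgf g1] by simp
      also have "\<dots> = Comp C (\<gamma> k) (Comp C f (\<alpha> n))"
        using cat_assoc[OF cat hi hf g1] fa by simp
      also have "\<dots> = Comp C (Comp C g (u k)) (\<alpha> n)"
        using gu cat_assoc[OF cat ha hf g1] by simp
      finally show "Comp C (Comp C g (u (k*n))) (\<iota> n) = Comp C (Comp C g (u k)) (\<alpha> n)" .
    qed
    then obtain f' where hf': "hom C f' Y Z" and f'c: "Comp C f' c = g"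
      using coeq_ex[OF co cat, of g Z] hg Cp by auto
    have f'cu: "Comp C f' (Comp C c (u s)) = Comp C (\<gamma> s) f" for s
      using cat_assoc[OF cat hu hc hf'] f'c gu by simp
    have f'r: "Comp C f' r = f" unfolding r_def using f'cu[of 1] g2 cat_idl[OF cat hf] by simp
    have f'dm: "datum_morphism C Y (\<lambda>_. Y) (\<lambda>_. Idm C Y) \<beta> Z (\<lambda>_. Z) (\<lambda>_. Idm C Z) \<gamma> f'"
      unfolding datum_morphism_def
    proof (intro conjI allI hf' exI[of _ f'])
      fix m
      show "Comp C (Idm C Z) f' = Comp C f' (Idm C Y)"
        using cat_idl[OF cat hf'] cat_idr[OF cat hf'] by simp
      show "Comp C (\<gamma> m) f' = Comp C f' (\<beta> m)"
      proof (rule Yext[OF cat_comp[OF cat hf' g1] cat_comp[OF cat b1 hf']])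
        fix s
        show "Comp C (Comp C (\<gamma> m) f') (Comp C c (u s)) = Comp C (Comp C f' (\<beta> m)) (Comp C c (u s))"
          using cat_assoc[OF cat hcu hf' g1] cat_assoc[OF cat hcu b1 hf'] f'cu b3
            cat_assoc[OF cat hf g1 g1] g3 by simp
      qed
    qed
    show "\<exists>!f'. datum_morphism C Y (\<lambda>_. Y) (\<lambda>_. Idm C Y) \<beta> Z (\<lambda>_. Z) (\<lambda>_. Idm C Z) \<gamma> f' \<and>
                  Comp C f' r = f"
    proof (rule ex1I[of _ f'])
      show "datum_morphism C Y (\<lambda>_. Y) (\<lambda>_. Idm C Y) \<beta> Z (\<lambda>_. Z) (\<lambda>_. Idm C Z) \<gamma> f' \<and> Comp C f' r = f"
        using f'dm f'r by simp
      fix h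
      assume a: "datum_morphism C Y (\<lambda>_. Y) (\<lambda>_. Idm C Y) \<beta> Z (\<lambda>_. Z) (\<lambda>_. Idm C Z) \<gamma> h \<and> Comp C h r = f"
      have hh: "hom C h Y Z" using a unfolding datum_morphism_def by auto
      have hb: "Comp C (\<gamma> m) h = Comp C h (\<beta> m)" for m
      proof -
        obtain fm where e0: "hom C fm Y Z" and e1: "Comp C (Idm C Z) fm = Comp C h (Idm C Y)"
          and e2: "Comp C (\<gamma> m) fm = Comp C h (\<beta> m)"
          using a unfolding datum_morphism_def by blast
        have "fm = h" using cat_idl[OF cat e0] e1 cat_idr[OF cat hh] by simp
        then show ?thesis using e2 by simp
      qed
      show "h = f'"
      proof (rule Yext[OF hh hf'])
        fix s
        have "Comp C h (Comp C c (u s)) = Comp C h (Comp C (\<beta> s) r)"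
          using b3[of s 1] unfolding r_def by simp
        also have "\<dots> = Comp C (\<gamma> s) f"
        proof -
          have "Comp C h (Comp C (\<beta> s) r) = Comp C (Comp C h (\<beta> s)) r"
            using cat_assoc[OF cat hr b1 hh] by simp
          also have "\<dots> = Comp C (Comp C (\<gamma> s) h) r" using hb[of s] by simp
          also have "\<dots> = Comp C (\<gamma> s) (Comp C h r)" using cat_assoc[OF cat hr hh g1] by simp
          finally show ?thesis using a by simp
        qed
        finally show "Comp C h (Comp C c (u s)) = Comp C f' (Comp C c (u s))"
          using f'cu by simp
      qed
    qed
  qed
  have all: "\<forall>m. hom C (\<beta> m) Y Y \<and>
               (\<forall>s. Comp C (\<beta> m) (Comp C c (u s)) = Comp C c (u (m * s))) \<and>
               (\<forall>b. hom C b Y Y \<longrightarrow>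
                    (\<forall>s. Comp C b (Comp C c (u s)) = Comp C c (u (m * s))) \<longrightarrow> b = \<beta> m)"
  proof
    fix m
    show "hom C (\<beta> m) Y Y \<and>
               (\<forall>s. Comp C (\<beta> m) (Comp C c (u s)) = Comp C c (u (m * s))) \<and>
               (\<forall>b. hom C b Y Y \<longrightarrow>
                    (\<forall>s. Comp C b (Comp C c (u s)) = Comp C c (u (m * s))) \<longrightarrow> b = \<beta> m)"
    proof (intro conjI)
      show "\<forall>s. Comp C (\<beta> m) (Comp C c (u s)) = Comp C c (u (m * s))" using b3 by simp
    qed (rule b1, rule uniq)
  qed
  have refl2: "is_reflection C X D \<iota> \<alpha> Y \<beta> (Comp C c (u 1))"
    using refl unfolding r_def .
  show ?thesis
    apply (rule exI[of _ \<beta>])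
    apply (rule conjI)
     apply (rule all)
    apply (rule conjI)
     apply (rule ga)
    apply (rule refl2)
    done
qed

end
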